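(* Let $c:\mathbb{R}_+\to\mathbb{R}_+$ be twice continuously differentiable, strictly semi-convex and strictly increasing, but not of BPR-type. Then there is a nonatomic routing game with a single origin-destination pair, consisting of two parallel edges from the origin to the destination with cost functions $c(x)$ and $c(x)+t$ for some $t\in\mathbb{R}_+$, that does not have a demand-independent optimal toll (DIOT).
   Context: A function $c$ is of BPR-type if $c(x)=t_c+a_cx^{\beta}$ for all $x\ge0$, for some $t_c,a_c\in\mathbb{R}_+$ and $\beta>0$. Strictly semi-convex means that $x\mapsto x\,c(x)$ is strictly convex. In a nonatomic routing game with a single origin $o$, destination $d$ and demand $\mu\ge0$, a flow splits $\mu$ among the $o$–$d$ paths (here the two edges); an edge with load $x$ has cost $c_e(x)$. A Wardrop equilibrium is a flow where every used path has cost at most that of every other path; a system optimum minimizes the total cost $\sum_e x_ec_e(x_e)$. For a toll vector $\boldsymbol{\tau}\in\mathbb{R}^{\mathcal{E}}$ (entries may be negative), the tolled game has edge costs $c_e(x)+\tau_e$. $\boldsymbol{\tau}$ is a DIOT if for every demand $\mu\ge0$ every Wardrop equilibrium of the tolled game is a system optimum of the untolled game for that demand. *)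

theory Defs
  imports "HOL-Analysis.Analysis"
begin

definition strict_convex_on_real :: "real set \<Rightarrow> (real \<Rightarrow> real) \<Rightarrow> bool" where
  "strict_convex_on_real S f \<longleftrightarrow>
     (\<forall>x\<in>S. \<forall>y\<in>S. \<forall>u::real. x \<noteq> y \<and> 0 < u \<and> u < 1 \<longrightarrow>
        f (u * x + (1 - u) * y) < u * f x + (1 - u) * f y)"

definition strictly_semi_convex :: "(real \<Rightarrow> real) \<Rightarrow> bool" where
  "strictly_semi_convex c \<longleftrightarrow> strict_convex_on_real {0..} (\<lambda>x. x * c x)"

definition BPR_type :: "(real \<Rightarrow> real) \<Rightarrow> bool" where
  "BPR_type c \<longleftrightarrow> (\<exists>t a \<beta>::real. t \<ge> 0 \<and> a \<ge> 0 \<and> \<beta> > 0 \<and>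
      (\<forall>x\<ge>0. c x = t + a * x powr \<beta>))"

definition twice_cont_diff_nonneg :: "(real \<Rightarrow> real) \<Rightarrow> bool" where
  "twice_cont_diff_nonneg c \<longleftrightarrow> (\<exists>c' c''.
      (\<forall>x\<ge>0. (c has_real_derivative c' x) (at x within {0..})) \<and>
      (\<forall>x\<ge>0. (c' has_real_derivative c'' x) (at x within {0..})) \<and>
      continuous_on {0..} c'')"

text \<open>Two parallel o-d edges (edge 1 and edge 2); a flow is a pair of edge loads.\<close>
definition feasible2 :: "real \<Rightarrow> real \<Rightarrow> real \<Rightarrow> bool" where
  "feasible2 \<mu> x1 x2 \<longleftrightarrow> x1 \<ge> 0 \<and> x2 \<ge> 0 \<and> x1 + x2 = \<mu>"

definition wardrop2 :: "(real \<Rightarrow> real) \<Rightarrow> (real \<Rightarrow> real) \<Rightarrow> real \<Rightarrow> real \<Rightarrow> real \<Rightarrow> bool" where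
  "wardrop2 c1 c2 \<mu> x1 x2 \<longleftrightarrow> feasible2 \<mu> x1 x2 \<and>
     (x1 > 0 \<longrightarrow> c1 x1 \<le> c2 x2) \<and> (x2 > 0 \<longrightarrow> c2 x2 \<le> c1 x1)"

definition total_cost2 :: "(real \<Rightarrow> real) \<Rightarrow> (real \<Rightarrow> real) \<Rightarrow> real \<Rightarrow> real \<Rightarrow> real" where
  "total_cost2 c1 c2 x1 x2 = x1 * c1 x1 + x2 * c2 x2"

definition sysopt2 :: "(real \<Rightarrow> real) \<Rightarrow> (real \<Rightarrow> real) \<Rightarrow> real \<Rightarrow> real \<Rightarrow> real \<Rightarrow> bool" where
  "sysopt2 c1 c2 \<mu> x1 x2 \<longleftrightarrow> feasible2 \<mu> x1 x2 \<and>
     (\<forall>y1 y2. feasible2 \<mu> y1 y2 \<longrightarrow> total_cost2 c1 c2 x1 x2 \<le> total_cost2 c1 c2 y1 y2)"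

definition is_DIOT2 :: "(real \<Rightarrow> real) \<Rightarrow> (real \<Rightarrow> real) \<Rightarrow> real \<Rightarrow> real \<Rightarrow> bool" where
  "is_DIOT2 c1 c2 \<tau>1 \<tau>2 \<longleftrightarrow> (\<forall>\<mu>\<ge>0. \<forall>x1 x2.
      wardrop2 (\<lambda>x. c1 x + \<tau>1) (\<lambda>x. c2 x + \<tau>2) \<mu> x1 x2 \<longrightarrow> sysopt2 c1 c2 \<mu> x1 x2)"

end

theory Submission
  imports Defs
begin

definition mm :: "(real \<Rightarrow> real) \<Rightarrow> (real \<Rightarrow> real) \<Rightarrow> real \<Rightarrow> real" where
  "mm c c' x = c x + x * c' x"

lemma aux1: "(P::real) < X/2 + Y/2 \<Longrightarrow> Q/2 \<le> P - X \<Longrightarrow> Q < Y - X" by linarith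
lemma aux2: "(Q::real) < Y - X \<Longrightarrow> - R \<le> X - Y \<Longrightarrow> Q < R" by linarith

context
  fixes c c' :: "real \<Rightarrow> real"
  assumes der: "\<forall>x\<ge>0. (c has_real_derivative c' x) (at x within {0..})"
  and ssc: "strictly_semi_convex c"
  and smono: "strict_mono_on {0..} c"
begin

lemma der_at: "x > 0 \<Longrightarrow> (c has_real_derivative c' x) (at x)"
proof -
  assume "x > 0"
  then have "x \<in> interior {0::real..}" by simp
  then have "at x within {0..} = at x" by (rule at_within_interior)
  with der \<open>x > 0\<close> show ?thesis by (metis less_imp_le)
qed

lemma cont: "continuous_on {0..} c"
  using der DERIV_continuous continuous_on_eq_continuous_within by fastforce

lemma gder: "x \<ge> 0 \<Longrightarrow> ((\<lambda>x. x * c x) has_real_derivative mm c c' x) (at x within {0..})"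
  unfolding mm_def
  by (auto intro!: derivative_eq_intros der[rule_format] simp: algebra_simps)

lemma gder_at: "x > 0 \<Longrightarrow> ((\<lambda>x. x * c x) has_real_derivative mm c c' x) (at x)"
  unfolding mm_def
  by (auto intro!: derivative_eq_intros der_at simp: algebra_simps)

lemma sconv: "x \<ge> 0 \<Longrightarrow> y \<ge> 0 \<Longrightarrow> x \<noteq> y \<Longrightarrow> 0 < u \<Longrightarrow> u < 1 \<Longrightarrow>
   (u * x + (1 - u) * y) * c (u * x + (1 - u) * y) < u * (x * c x) + (1 - u) * (y * c y)"
  using ssc unfolding strictly_semi_convex_def strict_convex_on_real_def by auto

lemma gconv: "convex_on {0..} (\<lambda>x. x * c x)"
  unfolding convex_on_def
proof (intro conjI ballI allI impI)
  show "convex {0::real..}" by simp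
  fix x y :: real and u v :: real
  assume xy: "x \<in> {0..}" "y \<in> {0..}" and uv: "0 \<le> u" "0 \<le> v" "u + v = 1"
  show "(u *\<^sub>R x + v *\<^sub>R y) * c (u *\<^sub>R x + v *\<^sub>R y) \<le> u * (x * c x) + v * (y * c y)"
  proof (cases "x = y \<or> u = 0 \<or> v = 0")
    case True
    then consider "x = y" | "u = 0" | "v = 0" by blast
    then show ?thesis
    proof cases
      case 1
      have "u * x + v * x = (u + v) * x" by (simp only: distrib_right)
      then have e: "u *\<^sub>R x + v *\<^sub>R y = x" using 1 uv by simp
      have "u * (x * c x) + v * (y * c y) = (u + v) * (x * c x)" using 1 by (simp only: distrib_right)
      then show ?thesis using e uv by simp
    next
      case 2
      then show ?thesis using uv by simp
    next
      case 3
      then show ?thesis using uv by simp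
    qed
  next
    case False
    then have "v = 1 - u" "0 < u" "u < 1" using uv by auto
    then show ?thesis using sconv[of x y u] xy False by auto
  qed
qed

lemma tangent: "x > 0 \<Longrightarrow> y \<ge> 0 \<Longrightarrow> y * c y - x * c x \<ge> mm c c' x * (y - x)"
  using convex_on_imp_above_tangent[OF gconv, of x y "mm c c' x"] gder[of x]
  by (auto simp: connected_iff_interval)

lemma mm_gt0: "x > 0 \<Longrightarrow> mm c c' x > c 0"
proof -
  assume x: "x > 0"
  have "0 * c 0 - x * c x \<ge> mm c c' x * (0 - x)" using tangent[OF x, of 0] by simp
  then have "x * mm c c' x \<ge> x * c x" by (simp add: algebra_simps)
  then have "mm c c' x \<ge> c x" using x by simp
  moreover have "c x > c 0" using smono x unfolding strict_mono_on_def by auto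
  ultimately show ?thesis by simp
qed

lemma mm_mono: "0 < x \<Longrightarrow> x < y \<Longrightarrow> mm c c' x < mm c c' y"
proof -
  assume x: "0 < x" and xy: "x < y"
  define z where "z = (1/2) * x + (1 - 1/2) * y"
  have s: "z * c z < (1/2) * (x * c x) + (1 - 1/2) * (y * c y)"
    unfolding z_def using sconv[of x y "1/2"] x xy by auto
  have t1: "z * c z - x * c x \<ge> mm c c' x * (z - x)" using tangent[OF x, of z] x xy z_def by simp
  have t2: "x * c x - y * c y \<ge> mm c c' y * (x - y)" using tangent[of y x] x xy by simp
  have "z - x = (y - x) / 2" unfolding z_def by simp
  then have e: "mm c c' x * (z - x) = mm c c' x * (y - x) / 2" by simp
  have s': "z * c z < (x * c x) / 2 + (y * c y) / 2" using s by simp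
  have a1: "mm c c' x * (y - x) < y * c y - x * c x"
    by (rule aux1[OF s' t1[unfolded e]])
  have e2: "mm c c' y * (x - y) = - (mm c c' y * (y - x))" by (simp add: algebra_simps)
  have "mm c c' x * (y - x) < mm c c' y * (y - x)"
    by (rule aux2[OF a1 t2[unfolded e2]])
  then show ?thesis using xy by simp
qed

lemma mm0: "mm c c' 0 = c 0" by (simp add: mm_def)

lemma mm_mono_le: "0 \<le> x \<Longrightarrow> x \<le> y \<Longrightarrow> mm c c' x \<le> mm c c' y"
proof -
  assume a: "0 \<le> x" "x \<le> y"
  show ?thesis
  proof (cases "x = y")
    case False
    then have xy: "x < y" using a by simp
    show ?thesis
    proof (cases "x = 0")
      case True
      then show ?thesis using mm0 mm_gt0[of y] xy by simp
    next
      case False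
      then show ?thesis using mm_mono[of x y] xy a by simp
    qed
  qed simp
qed


lemma foc_int:
  assumes so: "sysopt2 c (\<lambda>x. c x + t) \<mu> x1 x2" and x1: "x1 > 0" and x2: "x2 > 0"
  shows "mm c c' x1 = mm c c' x2 + t"
proof -
  define \<phi> where "\<phi> s = (x1 + s) * c (x1 + s) + (x2 - s) * (c (x2 - s) + t)" for s
  have h1: "((\<lambda>s. (\<lambda>x. x * c x) (x1 + s)) has_real_derivative mm c c' x1 * 1) (at 0)"
    by (rule DERIV_chain2[where f="\<lambda>x. x * c x"]) (use gder_at[OF x1] in simp, auto intro!: derivative_eq_intros)
  have b2: "((\<lambda>x. x * (c x + t)) has_real_derivative mm c c' x2 + t) (at x2)"
    using x2 by (auto intro!: derivative_eq_intros der_at simp: mm_def algebra_simps)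
  have h2: "((\<lambda>s. (\<lambda>x. x * (c x + t)) (x2 - s)) has_real_derivative (mm c c' x2 + t) * (-1)) (at 0)"
    by (rule DERIV_chain2[where f="\<lambda>x. x * (c x + t)"]) (use b2 in simp, auto intro!: derivative_eq_intros)
  have d: "(\<phi> has_real_derivative (mm c c' x1 * 1 + (mm c c' x2 + t) * (-1))) (at 0)"
    unfolding \<phi>_def using DERIV_add[OF h1 h2] by simp
  have fe: "feasible2 \<mu> x1 x2" and mn: "\<forall>y1 y2. feasible2 \<mu> y1 y2 \<longrightarrow>
      total_cost2 c (\<lambda>x. c x + t) x1 x2 \<le> total_cost2 c (\<lambda>x. c x + t) y1 y2"
    using so unfolding sysopt2_def by auto
  have "\<forall>s. \<bar>0 - s\<bar> < min x1 x2 \<longrightarrow> \<phi> 0 \<le> \<phi> s"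
  proof (intro allI impI)
    fix s :: real assume "\<bar>0 - s\<bar> < min x1 x2"
    then have "feasible2 \<mu> (x1 + s) (x2 - s)" using fe unfolding feasible2_def by auto
    then have "total_cost2 c (\<lambda>x. c x + t) x1 x2 \<le> total_cost2 c (\<lambda>x. c x + t) (x1 + s) (x2 - s)"
      using mn by blast
    then show "\<phi> 0 \<le> \<phi> s" unfolding \<phi>_def total_cost2_def by simp
  qed
  then have "mm c c' x1 * 1 + (mm c c' x2 + t) * (-1) = 0"
    using DERIV_local_min[OF d, of "min x1 x2"] x1 x2 by simp
  then show ?thesis by simp
qed

lemma deriv_neg_right:
  fixes f :: "real \<Rightarrow> real"
  assumes d: "(f has_real_derivative l) (at 0 within {0..})" and l: "l < 0" and e: "e > 0"
  shows "\<exists>s. 0 < s \<and> s < e \<and> f s < f 0"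
proof -
  have "(f has_real_derivative l) (at 0 within {0<..})"
    by (rule DERIV_subset[OF d]) auto
  then have "((\<lambda>y. (f y - f 0) / (y - 0)) \<longlongrightarrow> l) (at_right 0)"
    unfolding has_field_derivative_iff by simp
  then have ev: "eventually (\<lambda>y. (f y - f 0) / (y - 0) < 0) (at_right 0)"
    using l by (simp add: order_tendstoD(2))
  then obtain b where b: "b > 0" "\<And>y. y > 0 \<Longrightarrow> y < b \<Longrightarrow> (f y - f 0) / (y - 0) < 0"
    unfolding eventually_at_right_field by auto
  define s where "s = min b e / 2"
  have s: "0 < s" "s < b" "s < e" using b e unfolding s_def by auto
  then have "(f s - f 0) / s < 0" using b(2)[of s] by simp
  then have "f s - f 0 < 0" using s by (simp add: divide_less_0_iff)
  then show ?thesis using s by auto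
qed

lemma foc_bd:
  assumes so: "sysopt2 c (\<lambda>x. c x + t) \<mu> \<mu> 0" and mu: "\<mu> > 0"
  shows "mm c c' \<mu> \<le> c 0 + t"
proof (rule ccontr)
  assume nl: "\<not> mm c c' \<mu> \<le> c 0 + t"
  define \<phi> where "\<phi> s = (\<mu> - s) * c (\<mu> - s) + s * (c s + t)" for s
  have h1: "((\<lambda>s. (\<lambda>x. x * c x) (\<mu> - s)) has_real_derivative mm c c' \<mu> * (-1)) (at 0)"
    by (rule DERIV_chain2[where f="\<lambda>x. x * c x"]) (use gder_at[OF mu] in simp, auto intro!: derivative_eq_intros)
  have h1': "((\<lambda>s. (\<lambda>x. x * c x) (\<mu> - s)) has_real_derivative mm c c' \<mu> * (-1)) (at 0 within {0..})"
    by (rule has_field_derivative_at_within[OF h1])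
  have h2: "((\<lambda>s. s * (c s + t)) has_real_derivative (c 0 + t)) (at 0 within {0..})"
    using der[rule_format, of 0] by (auto intro!: derivative_eq_intros)
  have d: "(\<phi> has_real_derivative (mm c c' \<mu> * (-1) + (c 0 + t))) (at 0 within {0..})"
    unfolding \<phi>_def using DERIV_add[OF h1' h2] by simp
  obtain s where s: "0 < s" "s < \<mu>" "\<phi> s < \<phi> 0"
    using deriv_neg_right[OF d _ mu] nl by auto
  have "feasible2 \<mu> (\<mu> - s) s" using s unfolding feasible2_def by auto
  then have "total_cost2 c (\<lambda>x. c x + t) \<mu> 0 \<le> total_cost2 c (\<lambda>x. c x + t) (\<mu> - s) s"
    using so unfolding sysopt2_def by blast
  then have "\<phi> 0 \<le> \<phi> s" unfolding \<phi>_def total_cost2_def by simp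
  then show False using s by simp
qed


lemma key:
  assumes D: "is_DIOT2 c (\<lambda>x. c x + t) \<tau>1 \<tau>2" and y: "y > 0" and tdef: "t = mm c c' y - c 0"
  shows "t + \<tau>2 - \<tau>1 = c y - c 0"
    and "\<forall>x1 x2. x1 > 0 \<longrightarrow> x2 > 0 \<longrightarrow> c x1 = c x2 + (t + \<tau>2 - \<tau>1) \<longrightarrow> mm c c' x1 = mm c c' x2 + t"
proof -
  have tpos: "t > 0" using mm_gt0[OF y] tdef by simp
  define \<delta> where "\<delta> = t + \<tau>2 - \<tau>1"
  have W: "\<And>\<mu> x1 x2. \<mu> \<ge> 0 \<Longrightarrow> wardrop2 (\<lambda>x. c x + \<tau>1) (\<lambda>x. c x + t + \<tau>2) \<mu> x1 x2 \<Longrightarrow> sysopt2 c (\<lambda>x. c x + t) \<mu> x1 x2"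
    using D unfolding is_DIOT2_def by auto
  have P2: "\<forall>x1 x2. x1 > 0 \<longrightarrow> x2 > 0 \<longrightarrow> c x1 = c x2 + \<delta> \<longrightarrow> mm c c' x1 = mm c c' x2 + t"
  proof (intro allI impI)
    fix x1 x2 :: real assume a: "x1 > 0" "x2 > 0" "c x1 = c x2 + \<delta>"
    have "wardrop2 (\<lambda>x. c x + \<tau>1) (\<lambda>x. c x + t + \<tau>2) (x1 + x2) x1 x2"
      using a unfolding wardrop2_def feasible2_def \<delta>_def by auto
    then have "sysopt2 c (\<lambda>x. c x + t) (x1 + x2) x1 x2" using W a by auto
    then show "mm c c' x1 = mm c c' x2 + t" using foc_int a by blast
  qed
  then show "\<forall>x1 x2. x1 > 0 \<longrightarrow> x2 > 0 \<longrightarrow> c x1 = c x2 + (t + \<tau>2 - \<tau>1) \<longrightarrow> mm c c' x1 = mm c c' x2 + t"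
    unfolding \<delta>_def by simp
  have A: "\<not> c y < c 0 + \<delta>"
  proof
    assume lt: "c y < c 0 + \<delta>"
    have "isCont c y" using der_at[OF y] by (rule DERIV_isCont)
    then have "(c \<longlongrightarrow> c y) (at y)" by (simp add: isCont_def)
    then have "eventually (\<lambda>x. c x < c 0 + \<delta>) (at y)" using lt by (rule order_tendstoD(2))
    then obtain d where d: "d > 0" "\<And>x. x \<noteq> y \<Longrightarrow> dist x y < d \<Longrightarrow> c x < c 0 + \<delta>"
      unfolding eventually_at by auto
    define \<mu> where "\<mu> = y + d / 2"
    have mu: "\<mu> > y" "c \<mu> < c 0 + \<delta>" using d unfolding \<mu>_def by (auto simp: dist_real_def)
    have "wardrop2 (\<lambda>x. c x + \<tau>1) (\<lambda>x. c x + t + \<tau>2) \<mu> \<mu> 0"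
      using mu y unfolding wardrop2_def feasible2_def \<delta>_def by auto
    then have "sysopt2 c (\<lambda>x. c x + t) \<mu> \<mu> 0" using W mu y by auto
    then have "mm c c' \<mu> \<le> c 0 + t" using foc_bd mu y by auto
    moreover have "mm c c' y < mm c c' \<mu>" using mm_mono[OF y mu(1)] .
    ultimately show False using tdef by simp
  qed
  have B: "\<not> c y > c 0 + \<delta>"
  proof
    assume gt: "c y > c 0 + \<delta>"
    show False
    proof (cases "c 0 - c y - \<delta> \<ge> 0")
      case True
      have "wardrop2 (\<lambda>x. c x + \<tau>1) (\<lambda>x. c x + t + \<tau>2) y 0 y"
        using True y unfolding wardrop2_def feasible2_def \<delta>_def by auto
      then have "sysopt2 c (\<lambda>x. c x + t) y 0 y" using W y by auto
      moreover have "feasible2 y y 0" using y unfolding feasible2_def by auto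
      ultimately have "total_cost2 c (\<lambda>x. c x + t) 0 y \<le> total_cost2 c (\<lambda>x. c x + t) y 0"
        unfolding sysopt2_def by blast
      then have "y * t \<le> 0" unfolding total_cost2_def by (simp add: algebra_simps)
      then show False using y tpos by (simp add: mult_le_0_iff)
    next
      case False
      define h where "h s = c s - c (y - s) - \<delta>" for s
      have ch: "continuous_on {0..y} h"
      proof -
        have c1: "continuous_on {0..y} c" by (rule continuous_on_subset[OF cont]) auto
        have c2: "continuous_on {0..y} (\<lambda>s. c (y - s))"
          by (rule continuous_on_compose2[OF cont]) (auto intro!: continuous_intros)
        show ?thesis unfolding h_def by (intro continuous_intros c1 c2)
      qed
      have "h 0 \<le> 0" "0 \<le> h y" using False gt unfolding h_def by auto
      then obtain s where s: "0 \<le> s" "s \<le> y" "h s = 0" using IVT'[of h 0 0 y] ch y by auto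
      have "s \<noteq> 0" using s False unfolding h_def by auto
      moreover have "s \<noteq> y" using s gt unfolding h_def by auto
      ultimately have s2: "0 < s" "s < y" using s by auto
      have "c s = c (y - s) + \<delta>" using s unfolding h_def by simp
      then have "mm c c' s = mm c c' (y - s) + t" using P2 s2 by auto
      moreover have "mm c c' (y - s) > c 0" using mm_gt0 s2 by simp
      moreover have "mm c c' s < mm c c' y" using mm_mono s2 by simp
      ultimately show False using tdef by simp
    qed
  qed
  from A B show "t + \<tau>2 - \<tau>1 = c y - c 0" unfolding \<delta>_def by linarith
qed

end

lemma cauchy_mono:
  fixes F :: "real \<Rightarrow> real"
  assumes add: "\<And>u v. 0 < u \<Longrightarrow> 0 < v \<Longrightarrow> u + v < L \<Longrightarrow> F (u + v) = F u + F v"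
    and F0: "F 0 = 0"
    and mono: "\<And>u v. 0 \<le> u \<Longrightarrow> u \<le> v \<Longrightarrow> v < L \<Longrightarrow> F u \<le> F v"
    and a: "0 < a" "a < L"
    and u: "0 \<le> u" "u < L"
  shows "F u = u * (F a / a)"
proof -
  have mult: "F (real n * w) = real n * F w" if w: "0 < w" "real n * w < L" for n w
    using that(2)
  proof (induction n)
    case 0 then show ?case using F0 by simp
  next
    case (Suc n)
    show ?case
    proof (cases "n = 0")
      case True then show ?thesis by simp
    next
      case False
      have nw: "0 < real n * w" using False w by simp
      have lt: "real n * w + w < L" using Suc.prems by (simp add: algebra_simps)
      have "real n * w < L" using lt w by simp
      then have ih: "F (real n * w) = real n * F w" by (rule Suc.IH)
      have "F (real (Suc n) * w) = F (real n * w + w)" by (simp add: algebra_simps)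
      also have "\<dots> = F (real n * w) + F w" using add[OF nw w(1) lt] .
      finally show ?thesis using ih by (simp add: algebra_simps)
    qed
  qed
  have Fa: "F a \<ge> 0" using mono[of 0 a] a F0 by simp
  show ?thesis
  proof (cases "u = 0")
    case True then show ?thesis using F0 by simp
  next
    case False
    then have upos: "u > 0" using u by simp
    show ?thesis
    proof (rule ccontr)
      assume ne: "F u \<noteq> u * (F a / a)"
      define D where "D = \<bar>F u - u * (F a / a)\<bar>"
      have Dpos: "D > 0" using ne unfolding D_def by simp
      obtain n :: nat where n1: "F a / D + a / (L - u) + 1 < real n"
        using reals_Archimedean2 by blast
      have Lu: "L - u > 0" using u by simp
      have "a / (L - u) > 0" using a Lu by simp
      moreover have "F a / D \<ge> 0" using Fa Dpos by simp
      ultimately have nA: "F a / D < real n" "a / (L - u) < real n" "1 < real n" using n1 by linarith+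
      have npos: "real n > 0" using nA by simp
      define w where "w = a / real n"
      have wpos: "w > 0" unfolding w_def using a npos by simp
      have wsmall: "w < L - u" unfolding w_def using nA(2) npos Lu a
        by (simp add: divide_less_eq mult.commute)
      have FaD: "F a / real n < D" using nA(1) Dpos npos by (simp add: divide_less_eq mult.commute)
      have Fw: "F a = real n * F w"
        using mult[of w n] wpos a npos unfolding w_def by simp
      then have Fw': "F w = F a / real n" using npos by simp
      have Fwnn: "F w \<ge> 0" using Fw' Fa npos by simp
      define p where "p = nat \<lfloor>u / w\<rfloor>"
      have uw: "u / w \<ge> 0" using upos wpos by simp
      have p1: "real p \<le> u / w" unfolding p_def using uw by linarith
      have p2: "u / w < real p + 1" unfolding p_def using uw by linarith
      have pw1: "real p * w \<le> u" using p1 wpos by (simp add: le_divide_eq)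
      have pw2: "u < (real p + 1) * w" using p2 wpos by (simp add: divide_less_eq)
      have pw3: "(real p + 1) * w < L" using pw1 wsmall by (simp add: algebra_simps)
      have Fp: "F (real p * w) = real p * F w"
      proof (cases "p = 0")
        case True then show ?thesis using F0 by simp
      next
        case False
        then show ?thesis using mult[of w p] wpos pw1 u by simp
      qed
      have Fp1: "F (real (Suc p) * w) = real (Suc p) * F w"
        using mult[of w "Suc p"] wpos pw3 by (simp add: add.commute)
      have lo: "real p * F w \<le> F u"
        using mono[of "real p * w" u] pw1 u wpos Fp by simp
      have hi0: "F u \<le> F ((real p + 1) * w)" by (rule mono) (use pw2 pw3 u in auto)
      have Fp1': "F ((real p + 1) * w) = (real p + 1) * F w" using Fp1 by (simp add: add.commute)
      have hi: "F u \<le> (real p + 1) * F w" using hi0 Fp1' by simp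
      have uw_eq: "u / w = u * real n / a" unfolding w_def using npos a by (simp add: field_simps)
      have eq: "u * (F a / a) = (u / w) * F w" unfolding uw_eq Fw by (simp add: field_simps)
      have lo2: "real p * F w \<le> (u / w) * F w" by (rule mult_right_mono[OF p1 Fwnn])
      have hi2: "(u / w) * F w \<le> (real p + 1) * F w" by (rule mult_right_mono[OF _ Fwnn]) (use p2 in simp)
      have "D \<le> F w" unfolding D_def eq using lo hi lo2 hi2 by (simp add: algebra_simps abs_le_iff)
      then show False using FaD Fw' by simp
    qed
  qed
qed


theorem theorem5:
  fixes c :: "real \<Rightarrow> real"
  assumes "\<forall>x\<ge>0. c x \<ge> 0"
    and "twice_cont_diff_nonneg c"
    and "strictly_semi_convex c"
    and "strict_mono_on {0..} c"
    and "\<not> BPR_type c"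
  shows "\<exists>t\<ge>0. \<not> (\<exists>\<tau>1 \<tau>2. is_DIOT2 c (\<lambda>x. c x + t) \<tau>1 \<tau>2)"
proof (rule ccontr)
  assume H: "\<not> (\<exists>t\<ge>0. \<not> (\<exists>\<tau>1 \<tau>2. is_DIOT2 c (\<lambda>x. c x + t) \<tau>1 \<tau>2))"
  then have HD: "\<And>t. t \<ge> 0 \<Longrightarrow> \<exists>\<tau>1 \<tau>2. is_DIOT2 c (\<lambda>x. c x + t) \<tau>1 \<tau>2" by blast
  obtain c' where der: "\<forall>x\<ge>0. (c has_real_derivative c' x) (at x within {0..})"
    using assms(2) unfolding twice_cont_diff_nonneg_def by blast
  note ssc = assms(3) and sm = assms(4)
  define c0 where "c0 = c 0"
  have smD: "\<And>x y. 0 \<le> x \<Longrightarrow> x < y \<Longrightarrow> c x < c y"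
    using sm unfolding strict_mono_on_def by auto
  have cle: "\<And>x y. 0 \<le> x \<Longrightarrow> 0 \<le> y \<Longrightarrow> c x \<le> c y \<Longrightarrow> x \<le> y"
    using smD by (meson not_le)
  have inj: "inj_on c {0..}" using sm by (rule strict_mono_on_imp_inj_on)
  define ci where "ci = the_inv_into {0..} c"
  have ci_c: "\<And>x. 0 \<le> x \<Longrightarrow> ci (c x) = x"
    unfolding ci_def using the_inv_into_f_f[OF inj] by auto
  have contc: "continuous_on {0..} c" using cont[OF der ssc sm] .
  have ivt: "\<And>X u. 0 \<le> X \<Longrightarrow> 0 \<le> u \<Longrightarrow> u \<le> c X - c0 \<Longrightarrow> \<exists>x. 0 \<le> x \<and> x \<le> X \<and> c x = c0 + u"
  proof -
    fix X u :: real assume a: "0 \<le> X" "0 \<le> u" "u \<le> c X - c0"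
    have "continuous_on {0..X} c" by (rule continuous_on_subset[OF contc]) auto
    then show "\<exists>x. 0 \<le> x \<and> x \<le> X \<and> c x = c0 + u"
      using IVT'[of c 0 "c0 + u" X] a unfolding c0_def by auto
  qed
  have pos: "\<And>x u. 0 \<le> x \<Longrightarrow> c x = c0 + u \<Longrightarrow> 0 < u \<Longrightarrow> 0 < x"
    unfolding c0_def by (metis less_add_same_cancel1 less_eq_real_def not_less_iff_gr_or_eq)
  define F where "F u = mm c c' (ci (c0 + u)) - c0" for u
  define a where "a = c 1 - c0"
  have apos: "a > 0" unfolding a_def c0_def using smD[of 0 1] by simp
  define k where "k = F a / a"
  have lin: "F u = u * k" if X: "X > 1" and u: "0 \<le> u" "u < c X - c0" for X u
  proof (rule cauchy_mono[of "c X - c0" F a u, folded k_def])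
    show "F 0 = 0" unfolding F_def using ci_c[of 0] mm0[OF der ssc sm] unfolding c0_def by simp
    show "0 < a" by (rule apos)
    show "a < c X - c0" unfolding a_def using smD[of 1 X] X by simp
    show "0 \<le> u" "u < c X - c0" using u by auto
  next
    fix u v :: real assume uv: "0 < u" "0 < v" "u + v < c X - c0"
    obtain x1 where x1: "0 \<le> x1" "x1 \<le> X" "c x1 = c0 + (u + v)" using ivt[of X "u + v"] uv X by auto
    obtain x2 where x2: "0 \<le> x2" "x2 \<le> x1" "c x2 = c0 + u" using ivt[of x1 u] uv x1 by auto
    obtain y where y: "0 \<le> y" "y \<le> x1" "c y = c0 + v" using ivt[of x1 v] uv x1 by auto
    have p: "0 < x1" "0 < x2" "0 < y" using pos x1 x2 y uv by (auto simp: add_pos_pos)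
    define t where "t = mm c c' y - c 0"
    have "t > 0" unfolding t_def using mm_gt0[OF der ssc sm p(3)] by simp
    then obtain \<tau>1 \<tau>2 where D: "is_DIOT2 c (\<lambda>x. c x + t) \<tau>1 \<tau>2" using HD by fastforce
    have k1: "t + \<tau>2 - \<tau>1 = c y - c 0" using key(1)[OF der ssc sm D p(3) t_def] .
    have k2: "\<forall>x1 x2. x1 > 0 \<longrightarrow> x2 > 0 \<longrightarrow> c x1 = c x2 + (t + \<tau>2 - \<tau>1) \<longrightarrow> mm c c' x1 = mm c c' x2 + t"
      using key(2)[OF der ssc sm D p(3) t_def] .
    have "c x1 = c x2 + (t + \<tau>2 - \<tau>1)" using k1 x1 x2 y unfolding c0_def by simp
    then have m: "mm c c' x1 = mm c c' x2 + t" using k2 p by blast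
    have "ci (c0 + (u + v)) = x1" "ci (c0 + u) = x2" "ci (c0 + v) = y"
      using ci_c x1 x2 y by (metis)+
    then show "F (u + v) = F u + F v" unfolding F_def using m t_def c0_def by simp
  next
    fix u v :: real assume uv: "0 \<le> u" "u \<le> v" "v < c X - c0"
    obtain xu where xu: "0 \<le> xu" "xu \<le> X" "c xu = c0 + u" using ivt[of X u] uv X by auto
    obtain xv where xv: "0 \<le> xv" "xv \<le> X" "c xv = c0 + v" using ivt[of X v] uv X by auto
    have "xu \<le> xv" using cle[of xu xv] xu xv uv by simp
    then have "mm c c' xu \<le> mm c c' xv" using mm_mono_le[OF der ssc sm] xu by simp
    moreover have "ci (c0 + u) = xu" "ci (c0 + v) = xv" using ci_c xu xv by metis+
    ultimately show "F u \<le> F v" unfolding F_def by simp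
  qed
  have mmlin: "mm c c' x - c0 = (c x - c0) * k" if x: "x \<ge> 0" for x
  proof -
    have "c x < c (x + 2)" using smD x by simp
    moreover have "c x - c0 \<ge> 0" unfolding c0_def using smD[of 0 x] x by (cases "x = 0") auto
    ultimately have "F (c x - c0) = (c x - c0) * k" using lin[of "x + 2" "c x - c0"] x by simp
    then show ?thesis unfolding F_def using ci_c x by simp
  qed
  define \<beta> where "\<beta> = k - 1"
  have ode: "x * c' x = \<beta> * (c x - c0)" if x: "x \<ge> 0" for x
    using mmlin[OF x] unfolding mm_def \<beta>_def by (simp add: algebra_simps)
  define h where "h x = (c x - c0) * x powr (- \<beta>)" for x
  have hder: "(h has_real_derivative 0) (at x)" if x: "x > 0" for x
  proof -
    have d: "(h has_real_derivative (c' x * x powr (- \<beta>) + (c x - c0) * ((- \<beta>) * x powr (- \<beta> - 1)))) (at x)"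
      unfolding h_def
      using x by (auto intro!: derivative_eq_intros der_at[OF der ssc sm x] has_real_derivative_powr[OF x])
    have e: "x powr (- \<beta> - 1) = x powr (- \<beta>) / x" using x by (simp add: powr_diff)
    have "c' x * x powr (- \<beta>) + (c x - c0) * ((- \<beta>) * x powr (- \<beta> - 1))
        = x powr (- \<beta>) * (x * c' x - \<beta> * (c x - c0)) / x"
      unfolding e using x by (simp add: field_simps)
    also have "\<dots> = 0" using ode x by simp
    finally show ?thesis using d by simp
  qed
  have hcont: "continuous_on {p..q} h" if "p > 0" for p q
    using that by (intro continuous_at_imp_continuous_on ballI DERIV_isCont[OF hder]) auto
  have hconst: "h x = h 1" if x: "x > 0" for x
  proof (cases "x < 1")
    case True
    show ?thesis using DERIV_isconst2[of x 1 h 1] True hcont[OF x, of 1] hder x by auto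
  next
    case False
    show ?thesis
    proof (cases "x = 1")
      case False
      then have "1 < x" using \<open>\<not> x < 1\<close> by simp
      then show ?thesis using DERIV_isconst2[of 1 x h x] hcont[of 1 x] hder by auto
    qed simp
  qed
  define A where "A = c 1 - c0"
  have cform: "c x = c0 + A * x powr \<beta>" if x: "x > 0" for x
  proof -
    have "(c x - c0) * x powr (- \<beta>) = A" using hconst[OF x] unfolding h_def A_def by simp
    then have "(c x - c0) * x powr (- \<beta>) * x powr \<beta> = A * x powr \<beta>" by simp
    moreover have "x powr (- \<beta>) * x powr \<beta> = 1" using x by (simp add: powr_minus)
    ultimately show ?thesis by (simp add: algebra_simps)
  qed
  have Apos: "A > 0" unfolding A_def c0_def using smD[of 0 1] by simp
  have bpos: "\<beta> > 0"
  proof (rule ccontr)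
    assume "\<not> \<beta> > 0"
    then have "(2::real) powr \<beta> \<le> 2 powr 0" by (intro powr_mono) auto
    then have "A * 2 powr \<beta> \<le> A" using Apos by simp
    then have "c 2 \<le> c 1" using cform[of 2] cform[of 1] by simp
    then show False using smD[of 1 2] by simp
  qed
  have "BPR_type c"
    unfolding BPR_type_def
  proof (intro exI conjI allI impI)
    show "c0 \<ge> 0" unfolding c0_def using assms(1) by simp
    show "A \<ge> 0" using Apos by simp
    show "\<beta> > 0" by (rule bpos)
    fix x :: real assume x: "x \<ge> 0"
    show "c x = c0 + A * x powr \<beta>"
    proof (cases "x = 0")
      case True then show ?thesis unfolding c0_def by simp
    next
      case False then show ?thesis using cform x by simp
    qed
  qed
  then show False using assms(5) by simp
qed

end
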